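(* Let $K_1,K_2$ be non-trivial $\mathcal R$-dioids. Then for all $a,a'\in K_1$ and $b,b'\in K_2$: (i) if $a\otimes b=0$ in $K_1\otimes_{\mathcal R}K_2$, then $a=0$ in $K_1$ or $b=0$ in $K_2$; (ii) if $0\ne a\otimes b\le a'\otimes b'$ in $K_1\otimes_{\mathcal R}K_2$, then $0\ne a\le a'$ in $K_1$ and $0\ne b\le b'$ in $K_2$.
   Context: An $\mathcal R$-dioid is a dioid in which every regular subset of its multiplicative monoid has a supremum $\sum A$ with $\sum(AB)=(\sum A)(\sum B)$ (equivalently a $*$-continuous Kleene algebra); non-trivial means $0\ne1$; $\le$ is the natural order $x\le y$ iff $x+y=y$. The tensor product $K_1\otimes_{\mathcal R}K_2$ is the $\mathcal R$-dioid with $\mathcal R$-morphisms (dioid morphisms preserving suprema of regular sets) $\top_1,\top_2$ from $K_1,K_2$ with elementwise commuting images, universal among such pairs; concretely $\mathcal R(K_1\times K_2)/{\equiv}$, where $\equiv$ is the least $\mathcal R$-congruence identifying $A\times B$ with $\{(\sum A,\sum B)\}$ for regular $A\subseteq K_1,B\subseteq K_2$ (an $\mathcal R$-congruence being a semiring congruence such that regular sets with equal downward closures modulo it have congruent suprema). We write $a\otimes b=\top_1(a)\top_2(b)$, the class of $\{(a,b)\}$. *)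

theory Defs
  imports Main
begin

text \<open>A dioid: semiring (with annihilating zero) whose addition is idempotent.
  Non-triviality (0 \<noteq> 1) is NOT built in; it is assumed explicitly.\<close>
class dioid = semiring_0 + monoid_mult +
  assumes add_idem: "x + x = x"

definition dle :: "'a::dioid \<Rightarrow> 'a \<Rightarrow> bool" where
  "dle x y \<longleftrightarrow> x + y = y"

definition setmul :: "('c \<Rightarrow> 'c \<Rightarrow> 'c) \<Rightarrow> 'c set \<Rightarrow> 'c set \<Rightarrow> 'c set" where
  "setmul mul A B = {mul a b | a b. a \<in> A \<and> b \<in> B}"

primrec setpow :: "('c \<Rightarrow> 'c \<Rightarrow> 'c) \<Rightarrow> 'c \<Rightarrow> 'c set \<Rightarrow> nat \<Rightarrow> 'c set" where
  "setpow mul e A 0 = {e}"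
| "setpow mul e A (Suc n) = setmul mul A (setpow mul e A n)"

definition setstar :: "('c \<Rightarrow> 'c \<Rightarrow> 'c) \<Rightarrow> 'c \<Rightarrow> 'c set \<Rightarrow> 'c set" where
  "setstar mul e A = (\<Union>n. setpow mul e A n)"

inductive_set regs_in :: "'c set \<Rightarrow> ('c \<Rightarrow> 'c \<Rightarrow> 'c) \<Rightarrow> 'c \<Rightarrow> 'c set set"
  for C :: "'c set" and mul :: "'c \<Rightarrow> 'c \<Rightarrow> 'c" and e :: 'c where
  fin: "finite A \<Longrightarrow> A \<subseteq> C \<Longrightarrow> A \<in> regs_in C mul e"
| union: "A \<in> regs_in C mul e \<Longrightarrow> B \<in> regs_in C mul e \<Longrightarrow> A \<union> B \<in> regs_in C mul e"
| prod: "A \<in> regs_in C mul e \<Longrightarrow> B \<in> regs_in C mul e \<Longrightarrow> setmul mul A B \<in> regs_in C mul e"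
| star: "A \<in> regs_in C mul e \<Longrightarrow> setstar mul e A \<in> regs_in C mul e"

abbreviation regs :: "('c \<Rightarrow> 'c \<Rightarrow> 'c) \<Rightarrow> 'c \<Rightarrow> 'c set set" where
  "regs mul e \<equiv> regs_in UNIV mul e"

abbreviation Reg :: "'a::dioid set set" where
  "Reg \<equiv> regs (*) 1"

definition is_sup :: "'a::dioid set \<Rightarrow> 'a \<Rightarrow> bool" where
  "is_sup A s \<longleftrightarrow> (\<forall>a\<in>A. dle a s) \<and> (\<forall>u. (\<forall>a\<in>A. dle a u) \<longrightarrow> dle s u)"

definition dsum :: "'a::dioid set \<Rightarrow> 'a" where
  "dsum A = (THE s. is_sup A s)"

definition R_dioid :: "'a::dioid itself \<Rightarrow> bool" where
  "R_dioid _ \<longleftrightarrow>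
     (\<forall>A::'a set. A \<in> Reg \<longrightarrow> (\<exists>s. is_sup A s)) \<and>
     (\<forall>A B::'a set. A \<in> Reg \<longrightarrow> B \<in> Reg \<longrightarrow>
        dsum (setmul (*) A B) = dsum A * dsum B)"

section \<open>The tensor product as R(K1 x K2) modulo the least R-congruence\<close>

definition pmul :: "'a::dioid \<times> 'b::dioid \<Rightarrow> 'a \<times> 'b \<Rightarrow> 'a \<times> 'b" where
  "pmul p q = (fst p * fst q, snd p * snd q)"

text \<open>R(M) for the monoid M (mul, e): regular subsets, with + = union,
  product = setmul, 0 = {}, 1 = {e}.  An R-congruence on R(M): an equivalence
  on R(M) compatible with union and product such that regular subsets
  (of the multiplicative monoid of R(M)) with equal downward closures modulo
  it have congruent suprema (suprema in R(M) are unions).  The order in the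
  quotient is [Y] \<le> [X] iff (Y \<union> X, X) is in the congruence.\<close>
definition R_cong :: "('c \<Rightarrow> 'c \<Rightarrow> 'c) \<Rightarrow> 'c \<Rightarrow> ('c set \<times> 'c set) set \<Rightarrow> bool" where
  "R_cong mul e \<theta> \<longleftrightarrow>
     equiv (regs mul e) \<theta> \<and>
     (\<forall>X X' Y Y'. (X, X') \<in> \<theta> \<longrightarrow> (Y, Y') \<in> \<theta> \<longrightarrow>
        (X \<union> Y, X' \<union> Y') \<in> \<theta> \<and> (setmul mul X Y, setmul mul X' Y') \<in> \<theta>) \<and>
     (\<forall>\<A> \<B>. \<A> \<in> regs_in (regs mul e) (setmul mul) {e} \<longrightarrow>
             \<B> \<in> regs_in (regs mul e) (setmul mul) {e} \<longrightarrow>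
        (\<forall>Y\<in>regs mul e. (\<exists>X\<in>\<A>. (Y \<union> X, X) \<in> \<theta>) \<longleftrightarrow> (\<exists>X\<in>\<B>. (Y \<union> X, X) \<in> \<theta>)) \<longrightarrow>
        (\<Union>\<A>, \<Union>\<B>) \<in> \<theta>)"

definition tensor_gens :: "(('a::dioid \<times> 'b::dioid) set \<times> ('a \<times> 'b) set) set" where
  "tensor_gens = {(A \<times> B, {(dsum A, dsum B)}) | A B. A \<in> Reg \<and> B \<in> Reg}"

definition tensor_cong :: "(('a::dioid \<times> 'b::dioid) set \<times> ('a \<times> 'b) set) set" where
  "tensor_cong = {(X, Y). \<forall>\<theta>. R_cong pmul (1, 1) \<theta> \<and> tensor_gens \<subseteq> \<theta> \<longrightarrow> (X, Y) \<in> \<theta>}"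

text \<open>Elements a \<otimes> b, zero, and natural order in the tensor product, on representatives.\<close>
definition tensor_zero :: "'a::dioid \<Rightarrow> 'b::dioid \<Rightarrow> bool" where
  "tensor_zero a b \<longleftrightarrow> ({(a, b)}, {}) \<in> tensor_cong"

definition tensor_le :: "'a::dioid \<Rightarrow> 'b::dioid \<Rightarrow> 'a \<Rightarrow> 'b \<Rightarrow> bool" where
  "tensor_le a b a' b' \<longleftrightarrow> ({(a, b)} \<union> {(a', b')}, {(a', b')}) \<in> tensor_cong"

end

theory Submission
  imports Defs
begin

lemma dle_refl: "dle (x::'a::dioid) x" by (simp add: dle_def add_idem)
lemma dle_trans: "dle (x::'a::dioid) y \<Longrightarrow> dle y z \<Longrightarrow> dle x z"
  by (metis dle_def add.assoc)
lemma dle_antisym: "dle (x::'a::dioid) y \<Longrightarrow> dle y x \<Longrightarrow> x = y"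
  by (metis dle_def add.commute)
lemma dle_zero: "dle 0 (x::'a::dioid)" by (simp add: dle_def)
lemma dle_zero_iff: "dle (x::'a::dioid) 0 \<longleftrightarrow> x = 0" by (simp add: dle_def)
lemma dle_multr: "dle (x::'a::dioid) y \<Longrightarrow> dle (x*z) (y*z)"
  by (metis dle_def distrib_right)
lemma dle_multl: "dle (x::'a::dioid) y \<Longrightarrow> dle (z*x) (z*y)"
  by (metis dle_def distrib_left)

lemma is_sup_unique: "is_sup A s \<Longrightarrow> is_sup A t \<Longrightarrow> s = t"
  unfolding is_sup_def by (meson dle_antisym)

lemma dsum_eq: "is_sup A s \<Longrightarrow> dsum A = s"
  unfolding dsum_def using is_sup_unique by blast

lemma is_sup_empty: "is_sup {} (0::'a::dioid)"
  by (simp add: is_sup_def dle_zero)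
lemma is_sup_single: "is_sup {x} (x::'a::dioid)"
  by (simp add: is_sup_def dle_refl)

lemma dsum_empty: "dsum {} = (0::'a::dioid)" by (rule dsum_eq[OF is_sup_empty])
lemma dsum_single: "dsum {x} = (x::'a::dioid)" by (rule dsum_eq[OF is_sup_single])

lemma Reg_fin: "finite A \<Longrightarrow> (A::'a::dioid set) \<in> Reg" by (rule regs_in.fin) auto

lemma dsum_sup: "R_dioid TYPE('a::dioid) \<Longrightarrow> (A::'a set) \<in> Reg \<Longrightarrow> is_sup A (dsum A)"
  unfolding R_dioid_def using dsum_eq by metis

lemma dsum_multr: "R_dioid TYPE('a::dioid) \<Longrightarrow> (A::'a set) \<in> Reg \<Longrightarrow>
   dsum A * z = dsum (setmul (*) A {z})"
  unfolding R_dioid_def by (metis Reg_fin finite.emptyI finite.insertI dsum_single)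

lemma dsum_multl: "R_dioid TYPE('a::dioid) \<Longrightarrow> (A::'a set) \<in> Reg \<Longrightarrow>
   z * dsum A = dsum (setmul (*) {z} A)"
  unfolding R_dioid_def by (metis Reg_fin finite.emptyI finite.insertI dsum_single)

lemma Reg_multr: "(A::'a::dioid set) \<in> Reg \<Longrightarrow> setmul (*) A {z} \<in> Reg"
  by (rule regs_in.prod) (auto intro: Reg_fin)
lemma Reg_multl: "(A::'a::dioid set) \<in> Reg \<Longrightarrow> setmul (*) {z} A \<in> Reg"
  by (rule regs_in.prod) (auto intro: Reg_fin)

inductive_set tcl :: "('a::dioid \<times> 'b::dioid) set \<Rightarrow> ('a \<times> 'b) set" for X where
  base: "p \<in> X \<Longrightarrow> p \<in> tcl X"
| down: "(x', y') \<in> tcl X \<Longrightarrow> dle x x' \<Longrightarrow> dle y y' \<Longrightarrow> (x, y) \<in> tcl X"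
| supL: "A \<in> Reg \<Longrightarrow> (\<forall>x\<in>A. (x, y) \<in> tcl X) \<Longrightarrow> (dsum A, y) \<in> tcl X"
| supR: "B \<in> Reg \<Longrightarrow> (\<forall>y\<in>B. (x, y) \<in> tcl X) \<Longrightarrow> (x, dsum B) \<in> tcl X"

lemma tcl_mono_gen: "p \<in> tcl X \<Longrightarrow> X \<subseteq> tcl Y \<Longrightarrow> p \<in> tcl Y"
proof (induction p rule: tcl.induct)
  case (down x' y' x y) then show ?case by (blast intro: tcl.down)
next
  case (supL A y) then show ?case by (blast intro: tcl.supL)
next
  case (supR B x) then show ?case by (blast intro: tcl.supR)
qed auto

lemma tcl_sub: "X \<subseteq> tcl Y \<Longrightarrow> tcl X \<subseteq> tcl Y"
  using tcl_mono_gen by blast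
lemma tcl_ext: "X \<subseteq> tcl X" by (auto intro: tcl.base)

lemma tcl_multr:
  assumes R1: "R_dioid TYPE('a::dioid)" and R2: "R_dioid TYPE('b::dioid)"
  and q: "\<forall>p\<in>X. pmul p q \<in> tcl Z"
  and p: "p \<in> tcl (X::('a\<times>'b) set)"
  shows "pmul p q \<in> tcl Z"
  using p
proof (induction p rule: tcl.induct)
  case (base p) then show ?case using q by auto
next
  case (down x' y' x y)
  have "(x' * fst q, y' * snd q) \<in> tcl Z" using down.IH by (simp add: pmul_def)
  then have "(x * fst q, y * snd q) \<in> tcl Z"
    by (rule tcl.down) (simp_all add: dle_multr down.hyps)
  then show ?case by (simp add: pmul_def)
next
  case (supL A y)
  have "\<forall>x\<in>setmul (*) A {fst q}. (x, y * snd q) \<in> tcl Z"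
  proof
    fix x assume "x \<in> setmul (*) A {fst q}"
    then obtain u where "u \<in> A" "x = u * fst q" unfolding setmul_def by blast
    then show "(x, y * snd q) \<in> tcl Z" using supL.IH by (auto simp: pmul_def)
  qed
  then have "(dsum (setmul (*) A {fst q}), y * snd q) \<in> tcl Z"
    by (rule tcl.supL[OF Reg_multr[OF supL.hyps(1)]])
  then show ?case using dsum_multr[OF R1 supL(1)] by (simp add: pmul_def)
next
  case (supR B x)
  have "\<forall>y\<in>setmul (*) B {snd q}. (x * fst q, y) \<in> tcl Z"
  proof
    fix y assume "y \<in> setmul (*) B {snd q}"
    then obtain u where "u \<in> B" "y = u * snd q" unfolding setmul_def by blast
    then show "(x * fst q, y) \<in> tcl Z" using supR.IH by (auto simp: pmul_def)
  qed
  then have "(x * fst q, dsum (setmul (*) B {snd q})) \<in> tcl Z"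
    by (rule tcl.supR[OF Reg_multr[OF supR.hyps(1)]])
  then show ?case using dsum_multr[OF R2 supR(1)] by (simp add: pmul_def)
qed

lemma tcl_multl:
  assumes R1: "R_dioid TYPE('a::dioid)" and R2: "R_dioid TYPE('b::dioid)"
  and q: "\<forall>q\<in>Y. pmul p q \<in> tcl Z"
  and p: "q \<in> tcl (Y::('a\<times>'b) set)"
  shows "pmul p q \<in> tcl Z"
  using p
proof (induction q rule: tcl.induct)
  case (base p) then show ?case using q by auto
next
  case (down x' y' x y)
  have "(fst p * x', snd p * y') \<in> tcl Z" using down.IH by (simp add: pmul_def)
  then have "(fst p * x, snd p * y) \<in> tcl Z"
    by (rule tcl.down) (simp_all add: dle_multl down.hyps)
  then show ?case by (simp add: pmul_def)
next
  case (supL A y)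
  have "\<forall>x\<in>setmul (*) {fst p} A. (x, snd p * y) \<in> tcl Z"
  proof
    fix x assume "x \<in> setmul (*) {fst p} A"
    then obtain u where "u \<in> A" "x = fst p * u" unfolding setmul_def by blast
    then show "(x, snd p * y) \<in> tcl Z" using supL.IH by (auto simp: pmul_def)
  qed
  then have "(dsum (setmul (*) {fst p} A), snd p * y) \<in> tcl Z"
    by (rule tcl.supL[OF Reg_multl[OF supL.hyps(1)]])
  then show ?case using dsum_multl[OF R1 supL(1)] by (simp add: pmul_def)
next
  case (supR B x)
  have "\<forall>y\<in>setmul (*) {snd p} B. (fst p * x, y) \<in> tcl Z"
  proof
    fix y assume "y \<in> setmul (*) {snd p} B"
    then obtain u where "u \<in> B" "y = snd p * u" unfolding setmul_def by blast
    then show "(fst p * x, y) \<in> tcl Z" using supR.IH by (auto simp: pmul_def)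
  qed
  then have "(fst p * x, dsum (setmul (*) {snd p} B)) \<in> tcl Z"
    by (rule tcl.supR[OF Reg_multl[OF supR.hyps(1)]])
  then show ?case using dsum_multl[OF R2 supR(1)] by (simp add: pmul_def)
qed

lemma tcl_mult:
  assumes R1: "R_dioid TYPE('a::dioid)" and R2: "R_dioid TYPE('b::dioid)"
  shows "setmul pmul (tcl X) (tcl Y) \<subseteq> tcl (setmul pmul X (Y::('a\<times>'b) set))"
proof -
  have "pmul p q \<in> tcl (setmul pmul X Y)" if "p \<in> tcl X" "q \<in> Y" for p q
  proof (rule tcl_multr[OF R1 R2 _ that(1)])
    have "pmul p' q \<in> setmul pmul X Y" if "p' \<in> X" for p'
      using that \<open>q \<in> Y\<close> unfolding setmul_def by blast
    then show "\<forall>p\<in>X. pmul p q \<in> tcl (setmul pmul X Y)" by (blast intro: tcl.base)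
  qed
  then have "pmul p q \<in> tcl (setmul pmul X Y)" if "p \<in> tcl X" "q \<in> tcl Y" for p q
    using tcl_multl[OF R1 R2 _ that(2)] that(1) by blast
  then show ?thesis by (auto simp: setmul_def)
qed


lemma tcl_eq_iff: "tcl X = tcl Y \<longleftrightarrow> X \<subseteq> tcl Y \<and> Y \<subseteq> tcl X"
  using tcl_sub tcl_ext by blast

lemma tcl_mono: "X \<subseteq> Y \<Longrightarrow> tcl X \<subseteq> tcl Y"
  using tcl_sub tcl_ext by blast

lemma setmul_mono: "A \<subseteq> A' \<Longrightarrow> B \<subseteq> B' \<Longrightarrow> setmul m A B \<subseteq> setmul m A' B'"
  unfolding setmul_def by blast

lemma setmul_Union: "\<Union>(setmul (setmul m) AA BB) = setmul m (\<Union>AA) (\<Union>BB)"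
proof (intro equalityI subsetI)
  fix x assume "x \<in> \<Union>(setmul (setmul m) AA BB)"
  then obtain S where S: "S \<in> setmul (setmul m) AA BB" "x \<in> S" by blast
  then obtain A B where AB: "A \<in> AA" "B \<in> BB" "S = setmul m A B" unfolding setmul_def by blast
  then obtain a b where ab: "a \<in> A" "b \<in> B" "x = m a b" using S(2) unfolding setmul_def by blast
  have "a \<in> \<Union>AA" "b \<in> \<Union>BB" using ab AB by blast+
  then show "x \<in> setmul m (\<Union>AA) (\<Union>BB)" unfolding setmul_def using ab(3) by blast
next
  fix x assume "x \<in> setmul m (\<Union>AA) (\<Union>BB)"
  then obtain a b where ab: "a \<in> \<Union>AA" "b \<in> \<Union>BB" "x = m a b" unfolding setmul_def by blast
  then obtain A B where AB: "A \<in> AA" "B \<in> BB" "a \<in> A" "b \<in> B" by blast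
  have 1: "x \<in> setmul m A B" unfolding setmul_def using ab(3) AB(3,4) by blast
  have "setmul m A B \<in> setmul (setmul m) AA BB" unfolding setmul_def using AB(1,2) by blast
  then show "x \<in> \<Union>(setmul (setmul m) AA BB)" using 1 by blast
qed

lemma setpow_Union: "\<Union>(setpow (setmul m) {e} AA n) = setpow m e (\<Union>AA) n"
  by (induction n) (simp_all add: setmul_Union)

lemma setstar_Union: "\<Union>(setstar (setmul m) {e} AA) = setstar m e (\<Union>AA)"
proof -
  have "\<Union>(\<Union>n. setpow (setmul m) {e} AA n) = (\<Union>n. \<Union>(setpow (setmul m) {e} AA n))"
    by blast
  then show ?thesis unfolding setstar_def by (simp only: setpow_Union)
qed

lemma regs_sub:
  assumes "AA \<in> regs_in C m e" "e \<in> C" "\<forall>a\<in>C. \<forall>b\<in>C. m a b \<in> C"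
  shows "AA \<subseteq> C"
  using assms(1)
proof (induction rule: regs_in.induct)
  case (prod A B) then show ?case using assms(3) unfolding setmul_def by blast
next
  case (star A)
  have "setpow m e A n \<subseteq> C" for n
    by (induction n) (use star assms(2,3) in \<open>auto simp: setmul_def\<close>)
  then show ?case unfolding setstar_def by blast
qed auto

lemma Union_fin_reg: "finite F \<Longrightarrow> F \<subseteq> regs m e \<Longrightarrow> \<Union>F \<in> regs m e"
proof (induction rule: finite_induct)
  case empty then show ?case by (auto intro: regs_in.fin)
next
  case (insert x F) then show ?case by (auto intro: regs_in.union)
qed

lemma Union_reg:
  "AA \<in> regs_in (regs m e) (setmul m) {e} \<Longrightarrow> \<Union>AA \<in> regs m e"
proof (induction rule: regs_in.induct)
  case (fin A) then show ?case by (rule Union_fin_reg)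
next
  case (union A B) then show ?case by (auto intro: regs_in.union)
next
  case (prod A B)
  have "setmul m (\<Union>A) (\<Union>B) \<in> regs m e" by (rule regs_in.prod[OF prod.IH])
  then show ?case by (simp only: setmul_Union)
next
  case (star A)
  have "setstar m e (\<Union>A) \<in> regs m e" by (rule regs_in.star[OF star.IH])
  then show ?case by (simp only: setstar_Union)
qed

lemma setmul_image:
  assumes "\<And>a b. h (m a b) = m' (h a) (h b)"
  shows "h ` setmul m A B = setmul m' (h ` A) (h ` B)"
proof (intro equalityI subsetI)
  fix x assume "x \<in> h ` setmul m A B"
  then obtain a b where ab: "a \<in> A" "b \<in> B" "x = h (m a b)" unfolding setmul_def by blast
  then have "x = m' (h a) (h b)" using assms by simp
  then show "x \<in> setmul m' (h ` A) (h ` B)" unfolding setmul_def using ab by blast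
next
  fix x assume "x \<in> setmul m' (h ` A) (h ` B)"
  then obtain a b where ab: "a \<in> A" "b \<in> B" "x = m' (h a) (h b)" unfolding setmul_def by blast
  then have "x = h (m a b)" using assms by simp
  moreover have "m a b \<in> setmul m A B" unfolding setmul_def using ab by blast
  ultimately show "x \<in> h ` setmul m A B" by blast
qed

lemma regs_hom:
  assumes "A \<in> regs m e" "\<And>a b. h (m a b) = m' (h a) (h b)" "h e = e'"
  shows "h ` A \<in> regs m' e'"
  using assms(1)
proof (induction rule: regs_in.induct)
  case (fin A) then show ?case by (simp add: regs_in.fin)
next
  case (union A B) then show ?case unfolding image_Un by (intro regs_in.union) simp_all
next
  case (prod A B)
  have "h ` setmul m A B = setmul m' (h ` A) (h ` B)"
    by (rule setmul_image[where h=h and m=m and m'=m', OF assms(2)])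
  then show ?case using prod by (simp add: regs_in.prod)
next
  case (star A)
  have p: "h ` setpow m e A n = setpow m' e' (h ` A) n" for n
  proof (induction n)
    case 0 then show ?case using assms(3) by simp
  next
    case (Suc n)
    then show ?case unfolding setpow.simps by (simp add: setmul_image[where h=h and m=m and m'=m', OF assms(2)])
  qed
  have "h ` setstar m e A = setstar m' e' (h ` A)"
    unfolding setstar_def using p by (simp add: image_UN)
  then show ?case using star by (simp add: regs_in.star)
qed

lemma times_reg:
  assumes "(A::'a::dioid set) \<in> Reg" "(B::'b::dioid set) \<in> Reg"
  shows "A \<times> B \<in> regs pmul (1, 1)"
proof -
  have 1: "(\<lambda>x. (x, 1::'b)) ` A \<in> regs pmul (1, 1)"
    by (rule regs_hom[OF assms(1)]) (auto simp: pmul_def)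
  have 2: "(\<lambda>y. (1::'a, y)) ` B \<in> regs pmul (1, 1)"
    by (rule regs_hom[OF assms(2)]) (auto simp: pmul_def)
  have "A \<times> B = setmul pmul ((\<lambda>x. (x, 1::'b)) ` A) ((\<lambda>y. (1::'a, y)) ` B)"
  proof (intro equalityI subsetI)
    fix p assume "p \<in> A \<times> B"
    then obtain x y where p: "p = (x, y)" "x \<in> A" "y \<in> B" by blast
    have "p = pmul (x, 1) (1, y)" using p by (simp add: pmul_def)
    then show "p \<in> setmul pmul ((\<lambda>x. (x, 1::'b)) ` A) ((\<lambda>y. (1::'a, y)) ` B)"
      unfolding setmul_def using p by blast
  next
    fix p assume "p \<in> setmul pmul ((\<lambda>x. (x, 1::'b)) ` A) ((\<lambda>y. (1::'a, y)) ` B)"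
    then obtain x y where "p = pmul (x, 1) (1, y)" "x \<in> A" "y \<in> B"
      unfolding setmul_def by blast
    then show "p \<in> A \<times> B" by (simp add: pmul_def)
  qed
  then show ?thesis using 1 2 regs_in.prod by metis
qed

definition th :: "(('a::dioid \<times> 'b::dioid) set \<times> ('a \<times> 'b) set) set" where
  "th = {(X, Y). X \<in> regs pmul (1, 1) \<and> Y \<in> regs pmul (1, 1) \<and> tcl X = tcl Y}"

lemma sup_half:
  fixes AA BB :: "('a::dioid \<times> 'b::dioid) set set"
  assumes "AA \<in> regs_in (regs pmul (1, 1)) (setmul pmul) {(1, 1)}"
  and H: "\<forall>Y\<in>regs pmul (1, 1). (\<exists>X\<in>AA. (Y \<union> X, X) \<in> th) \<longrightarrow> (\<exists>X\<in>BB. (Y \<union> X, X) \<in> th)"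
  shows "\<Union>AA \<subseteq> tcl (\<Union>BB)"
proof -
  have sub: "AA \<subseteq> regs pmul (1, 1)"
    by (rule regs_sub[OF assms(1)]) (auto intro: regs_in.fin regs_in.prod)
  have "X \<subseteq> tcl (\<Union>BB)" if xA: "X \<in> AA" for X
  proof -
    have "X \<in> regs pmul (1, 1)" using sub xA by blast
    moreover have "(X \<union> X, X) \<in> th" using \<open>X \<in> regs pmul (1, 1)\<close> by (simp add: th_def)
    ultimately obtain X' where "X' \<in> BB" "(X \<union> X', X') \<in> th" using H xA by blast
    then have "X \<subseteq> tcl X'" unfolding th_def using tcl_ext by blast
    also have "\<dots> \<subseteq> tcl (\<Union>BB)" using \<open>X' \<in> BB\<close> by (intro tcl_mono) blast
    finally show ?thesis .
  qed
  then show ?thesis by blast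
qed

lemma th_R_cong:
  assumes R1: "R_dioid TYPE('a::dioid)" and R2: "R_dioid TYPE('b::dioid)"
  shows "R_cong pmul (1, 1) (th :: (('a \<times> 'b) set \<times> ('a \<times> 'b) set) set)"
  unfolding R_cong_def
proof (intro conjI allI impI)
  show "equiv (regs pmul (1, 1)) (th :: (('a \<times> 'b) set \<times> ('a \<times> 'b) set) set)"
    unfolding equiv_def refl_on_def sym_def trans_def th_def by auto
next
  fix X X' Y Y' :: "('a \<times> 'b) set"
  assume x: "(X, X') \<in> th" and y: "(Y, Y') \<in> th"
  have u: "X \<union> Y \<subseteq> tcl (X' \<union> Y')" if "X \<subseteq> tcl X'" "Y \<subseteq> tcl Y'"
    for X Y X' Y' :: "('a \<times> 'b) set"
    using that tcl_mono[of X' "X' \<union> Y'"] tcl_mono[of Y' "X' \<union> Y'"] by blast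
  have xr: "X \<in> regs pmul (1, 1)" "X' \<in> regs pmul (1, 1)" "tcl X = tcl X'" using x unfolding th_def by auto
  have yr: "Y \<in> regs pmul (1, 1)" "Y' \<in> regs pmul (1, 1)" "tcl Y = tcl Y'" using y unfolding th_def by auto
  have "X \<union> Y \<subseteq> tcl (X' \<union> Y')" "X' \<union> Y' \<subseteq> tcl (X \<union> Y)"
    using u xr(3) yr(3) unfolding tcl_eq_iff by blast+
  then have "tcl (X \<union> Y) = tcl (X' \<union> Y')" unfolding tcl_eq_iff by blast
  moreover have "X \<union> Y \<in> regs pmul (1, 1)" "X' \<union> Y' \<in> regs pmul (1, 1)"
    using xr yr by (blast intro: regs_in.union)+
  ultimately show "(X \<union> Y, X' \<union> Y') \<in> th" unfolding th_def by blast
  have m: "setmul pmul X Y \<subseteq> tcl (setmul pmul X' Y')" if "tcl X = tcl X'" "tcl Y = tcl Y'"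
    for X Y X' Y' :: "('a \<times> 'b) set"
  proof -
    have "setmul pmul X Y \<subseteq> setmul pmul (tcl X) (tcl Y)" by (intro setmul_mono tcl_ext)
    also have "\<dots> = setmul pmul (tcl X') (tcl Y')" using that by simp
    also have "\<dots> \<subseteq> tcl (setmul pmul X' Y')" by (rule tcl_mult[OF R1 R2])
    finally show ?thesis .
  qed
  have "tcl (setmul pmul X Y) = tcl (setmul pmul X' Y')"
    using m[of X X' Y Y'] m[of X' X Y' Y] xr(3) yr(3) unfolding tcl_eq_iff by simp
  moreover have "setmul pmul X Y \<in> regs pmul (1, 1)" "setmul pmul X' Y' \<in> regs pmul (1, 1)"
    using xr yr by (blast intro: regs_in.prod)+
  ultimately show "(setmul pmul X Y, setmul pmul X' Y') \<in> th" unfolding th_def by blast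
next
  fix AA BB :: "('a \<times> 'b) set set"
  assume a: "AA \<in> regs_in (regs pmul (1, 1)) (setmul pmul) {(1, 1)}"
    and b: "BB \<in> regs_in (regs pmul (1, 1)) (setmul pmul) {(1, 1)}"
    and H: "\<forall>Y\<in>regs pmul (1, 1). (\<exists>X\<in>AA. (Y \<union> X, X) \<in> th) = (\<exists>X\<in>BB. (Y \<union> X, X) \<in> th)"
  have "\<Union>AA \<subseteq> tcl (\<Union>BB)" by (rule sup_half[OF a]) (use H in blast)
  moreover have "\<Union>BB \<subseteq> tcl (\<Union>AA)" by (rule sup_half[OF b]) (use H in blast)
  ultimately show "(\<Union>AA, \<Union>BB) \<in> th"
    unfolding th_def tcl_eq_iff using Union_reg[OF a] Union_reg[OF b] by simp
qed

lemma gens_th: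
  assumes R1: "R_dioid TYPE('a::dioid)" and R2: "R_dioid TYPE('b::dioid)"
  shows "(tensor_gens :: (('a \<times> 'b) set \<times> ('a \<times> 'b) set) set) \<subseteq> th"
proof
  fix P :: "('a \<times> 'b) set \<times> ('a \<times> 'b) set"
  assume "P \<in> tensor_gens"
  then obtain A B where P: "P = (A \<times> B, {(dsum A, dsum B)})" and A: "A \<in> Reg" and B: "B \<in> Reg"
    unfolding tensor_gens_def by blast
  have sA: "is_sup A (dsum A)" by (rule dsum_sup[OF R1 A])
  have sB: "is_sup B (dsum B)" by (rule dsum_sup[OF R2 B])
  have 1: "A \<times> B \<subseteq> tcl {(dsum A, dsum B)}"
  proof
    fix p assume "p \<in> A \<times> B"
    then show "p \<in> tcl {(dsum A, dsum B)}" using sA sB unfolding is_sup_def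
      by (cases p) (auto intro: tcl.down[OF tcl.base])
  qed
  have "(dsum A, y) \<in> tcl (A \<times> B)" if "y \<in> B" for y
    by (rule tcl.supL[OF A]) (use that in \<open>auto intro: tcl.base\<close>)
  then have 2: "(dsum A, dsum B) \<in> tcl (A \<times> B)"
    by (intro tcl.supR[OF B]) blast
  show "P \<in> th" unfolding P th_def using 1 2 times_reg[OF A B]
    by (auto simp: tcl_eq_iff intro: regs_in.fin)
qed

lemma tensor_cong_th:
  assumes R1: "R_dioid TYPE('a::dioid)" and R2: "R_dioid TYPE('b::dioid)"
  and "(X, Y) \<in> (tensor_cong :: (('a \<times> 'b) set \<times> ('a \<times> 'b) set) set)"
  shows "(X, Y) \<in> th"
  using assms(3) th_R_cong[OF R1 R2] gens_th[OF R1 R2] unfolding tensor_cong_def by blast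

lemma sub_zero_dsum:
  assumes R: "R_dioid TYPE('a::dioid)" and A: "(A::'a set) \<in> Reg" and "A \<subseteq> {0}"
  shows "dsum A = 0"
proof -
  have "is_sup A (dsum A)" by (rule dsum_sup[OF R A])
  moreover have "\<forall>a\<in>A. dle a 0" using assms(3) dle_refl by blast
  ultimately have "dle (dsum A) 0" unfolding is_sup_def by blast
  then show ?thesis by (simp add: dle_zero_iff)
qed

lemma tcl_empty:
  assumes R1: "R_dioid TYPE('a::dioid)" and R2: "R_dioid TYPE('b::dioid)"
  and "p \<in> tcl ({} :: ('a \<times> 'b) set)"
  shows "fst p = 0 \<or> snd p = 0"
  using assms(3)
proof (induction rule: tcl.induct)
  case (down x' y' x y) then show ?case by (auto simp: dle_zero_iff)
next
  case (supL A y)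
  show ?case
  proof (cases "y = 0")
    case False
    then have "A \<subseteq> {0}" using supL by auto
    then show ?thesis using sub_zero_dsum[OF R1 supL(1)] by simp
  qed simp
next
  case (supR B x)
  show ?case
  proof (cases "x = 0")
    case False
    then have "B \<subseteq> {0}" using supR by auto
    then show ?thesis using sub_zero_dsum[OF R2 supR(1)] by simp
  qed simp
qed simp

lemma tcl_single:
  assumes R1: "R_dioid TYPE('a::dioid)" and R2: "R_dioid TYPE('b::dioid)"
  and "p \<in> tcl {(a', b') :: 'a \<times> 'b}"
  shows "fst p = 0 \<or> snd p = 0 \<or> (dle (fst p) a' \<and> dle (snd p) b')"
  using assms(3)
proof (induction rule: tcl.induct)
  case (base p) then show ?case by (auto simp: dle_refl)
next
  case (down x' y' x y) then show ?case by (auto simp: dle_zero_iff intro: dle_trans)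
next
  case (supL A y)
  show ?case
  proof (cases "y = 0")
    case False
    show ?thesis
    proof (cases "A \<subseteq> {0}")
      case True
      then show ?thesis using sub_zero_dsum[OF R1 supL(1)] by simp
    next
      case nz: False
      then obtain x where "x \<in> A" "x \<noteq> 0" by blast
      then have yb: "dle y b'" using supL False by auto
      have "\<forall>x\<in>A. dle x a'" using supL False by (auto simp: dle_zero)
      then have "dle (dsum A) a'" using dsum_sup[OF R1 supL(1)] unfolding is_sup_def by blast
      then show ?thesis using yb by simp
    qed
  qed simp
next
  case (supR B x)
  show ?case
  proof (cases "x = 0")
    case False
    show ?thesis
    proof (cases "B \<subseteq> {0}")
      case True
      then show ?thesis using sub_zero_dsum[OF R2 supR(1)] by simp
    next
      case nz: False
      then obtain y where "y \<in> B" "y \<noteq> 0" by blast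
      then have xa: "dle x a'" using supR False by auto
      have "\<forall>y\<in>B. dle y b'" using supR False by (auto simp: dle_zero)
      then have "dle (dsum B) b'" using dsum_sup[OF R2 supR(1)] unfolding is_sup_def by blast
      then show ?thesis using xa by simp
    qed
  qed simp
qed

lemma gens_mem:
  "(A::'a::dioid set) \<in> Reg \<Longrightarrow> (B::'b::dioid set) \<in> Reg \<Longrightarrow>
   (A \<times> B, {(dsum A, dsum B)}) \<in> tensor_gens"
  unfolding tensor_gens_def by blast

lemma zero_tensor_zero:
  assumes "a = 0 \<or> b = 0"
  shows "tensor_zero (a::'a::dioid) (b::'b::dioid)"
  unfolding tensor_zero_def tensor_cong_def
proof (simp only: mem_Collect_eq case_prod_conv, intro allI impI)
  fix \<theta> :: "(('a \<times> 'b) set \<times> ('a \<times> 'b) set) set"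
  assume h: "R_cong pmul (1, 1) \<theta> \<and> tensor_gens \<subseteq> \<theta>"
  have r: "({}::'a set) \<in> Reg" "{a} \<in> Reg" "({}::'b set) \<in> Reg" "{b} \<in> Reg"
    by (simp_all add: Reg_fin)
  have "(({}::'a set) \<times> {b}, {(dsum ({}::'a set), dsum {b})}) \<in> tensor_gens"
    by (rule gens_mem[OF r(1) r(4)])
  then have g1: "(({}::'a set) \<times> {b}, {(dsum ({}::'a set), dsum {b})}) \<in> \<theta>" using h by blast
  have "({a} \<times> ({}::'b set), {(dsum {a}, dsum ({}::'b set))}) \<in> tensor_gens"
    by (rule gens_mem[OF r(2) r(3)])
  then have g2: "({a} \<times> ({}::'b set), {(dsum {a}, dsum ({}::'b set))}) \<in> \<theta>" using h by blast
  have "sym \<theta>" using h unfolding R_cong_def equiv_def by blast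
  then show "({(a, b)}, {}) \<in> \<theta>"
    using assms g1 g2 by (auto simp: dsum_empty dsum_single dest: symD)
qed

theorem corollary1:
  fixes a a' :: "'a::dioid" and b b' :: "'b::dioid"
  assumes "R_dioid TYPE('a)" and "R_dioid TYPE('b)"
    and "(0::'a) \<noteq> 1" and "(0::'b) \<noteq> 1"
  shows "(tensor_zero a b \<longrightarrow> a = 0 \<or> b = 0) \<and>
         (\<not> tensor_zero a b \<and> tensor_le a b a' b' \<longrightarrow>
            a \<noteq> 0 \<and> dle a a' \<and> b \<noteq> 0 \<and> dle b b')"
proof (intro conjI impI)
  assume "tensor_zero a b"
  then have "({(a, b)}, {}) \<in> th"
    using tensor_cong_th[OF assms(1,2)] unfolding tensor_zero_def by blast
  then have "(a, b) \<in> tcl {}" unfolding th_def using tcl_ext by blast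
  then show "a = 0 \<or> b = 0" using tcl_empty[OF assms(1,2)] by fastforce
next
  assume h: "\<not> tensor_zero a b \<and> tensor_le a b a' b'"
  then have nz: "a \<noteq> 0" "b \<noteq> 0" using zero_tensor_zero by blast+
  have "({(a, b)} \<union> {(a', b')}, {(a', b')}) \<in> th"
    using tensor_cong_th[OF assms(1,2)] h unfolding tensor_le_def by blast
  then have "(a, b) \<in> tcl {(a', b')}" unfolding th_def using tcl_ext by blast
  then have "dle a a' \<and> dle b b'" using tcl_single[OF assms(1,2)] nz by fastforce
  then show "a \<noteq> 0" "dle a a'" "b \<noteq> 0" "dle b b'" using nz by auto
qed

end
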